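(* For every integer $m\ge1$, every $k\ge1$ and all integers $n_1,\dots,n_k$ (of arbitrary signs), $$M\big(\mathcal G(m,n_1)\,\mathcal G(m,n_2)\cdots\mathcal G(m,n_k)\big)=M\big(\mathcal G(m,n_1+n_2+\cdots+n_k)\big).$$
   Context: Grid conventions: an $m$-by-$N$ grid has vertices $(i,j)$, $1\le i\le m$ (rows), $1\le j\le N$ (columns); horizontal edges join $(i,j),(i,j+1)$, vertical edges join $(i,j),(i+1,j)$. A signed graph is a graph each of whose edges carries a sign $+1$ or $-1$ (parallel edges allowed). For a signed graph $\mathcal G$, $M(\mathcal G)$ denotes the sum over all perfect matchings of $\mathcal G$ of the product of the signs of the edges in the matching (the empty graph has $M=1$). For $m\ge1$ and $n\ge 1$, $\mathcal G(m,n)$ is the $m$-by-$n$ grid graph with all edges of sign $+1$. For $n\le 0$, $\mathcal G(m,n)$ has the vertex set of the $m$-by-$(2-n)$ grid, all horizontal edges of that grid with sign $+1$, the vertical edges lying in columns $2,3,\dots,1-n$ with sign $-1$, and no vertical edges in columns $1$ and $2-n$. A signed graph of width $m$ is a signed graph whose vertex set is that of an $m$-by-$N$ grid for some $N\ge1$ and whose edges are edges of that grid. For signed graphs $\mathcal G_1,\mathcal G_2$ of width $m$ (with $N_1$ and $N_2$ columns), the adjoined graph $\mathcal G_1\mathcal G_2$ is the signed graph of width $m$ with $N_1+N_2$ columns obtained by placing $\mathcal G_1$ to the left of $\mathcal G_2$ and joining, for each row $i$, the rightmost vertex of row $i$ of $\mathcal G_1$ to the leftmost vertex of row $i$ of $\mathcal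 G_2$ by an edge of sign $+1$. Adjunction is associative. *)

theory Defs
  imports Main
begin

type_synonym vtx = "nat \<times> nat"   (* (row i, column j), 1-based *)
type_synonym sedge = "(vtx \<times> vtx) \<times> int"  (* (endpoints, sign +1/-1) *)

text \<open>A signed graph of width m: number of columns N and a list of signed edges
(a list, so parallel edges are allowed). The width m is passed separately.\<close>
datatype sgraph = SG (ncols: nat) (sedges: "sedge list")

definition verts :: "nat \<Rightarrow> sgraph \<Rightarrow> vtx set" where
  "verts m g = {1..m} \<times> {1..ncols g}"

definition ends :: "sedge \<Rightarrow> vtx set" where
  "ends e = {fst (fst e), snd (fst e)}"

definition perfect_matching :: "nat \<Rightarrow> sgraph \<Rightarrow> nat set \<Rightarrow> bool" where
  "perfect_matching m g S \<longleftrightarrow> S \<subseteq> {..<length (sedges g)} \<and>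
     (\<forall>i\<in>S. ends (sedges g ! i) \<subseteq> verts m g) \<and>
     (\<forall>v\<in>verts m g. card {i\<in>S. v \<in> ends (sedges g ! i)} = 1)"

definition Mat :: "nat \<Rightarrow> sgraph \<Rightarrow> int" where
  "Mat m g = (\<Sum>S\<in>{S. perfect_matching m g S}. \<Prod>i\<in>S. snd (sedges g ! i))"

definition hedges :: "nat \<Rightarrow> nat \<Rightarrow> sedge list" where
  "hedges m N = [(((i,j),(i,j+1)), 1). i \<leftarrow> [1..<m+1], j \<leftarrow> [1..<N]]"

definition vedges :: "nat \<Rightarrow> nat list \<Rightarrow> int \<Rightarrow> sedge list" where
  "vedges m cols s = [(((i,j),(i+1,j)), s). i \<leftarrow> [1..<m], j \<leftarrow> cols]"

definition Ggrid :: "nat \<Rightarrow> int \<Rightarrow> sgraph" where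
  "Ggrid m n = (if n \<ge> 1 then SG (nat n) (hedges m (nat n) @ vedges m [1..<nat n + 1] 1)
                else SG (nat (2 - n)) (hedges m (nat (2 - n)) @ vedges m [2..<nat (2 - n)] (-1)))"

definition shift_edge :: "nat \<Rightarrow> sedge \<Rightarrow> sedge" where
  "shift_edge k e = (case e of (((i,j),(i',j')), s) \<Rightarrow> (((i,j+k),(i',j'+k)), s))"

definition adjoin :: "nat \<Rightarrow> sgraph \<Rightarrow> sgraph \<Rightarrow> sgraph" where
  "adjoin m g1 g2 = SG (ncols g1 + ncols g2)
     (sedges g1 @ map (shift_edge (ncols g1)) (sedges g2)
      @ [(((i, ncols g1), (i, ncols g1 + 1)), 1). i \<leftarrow> [1..<m+1]])"

fun adjoin_list :: "nat \<Rightarrow> sgraph list \<Rightarrow> sgraph" where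
  "adjoin_list m [] = SG 0 []"
| "adjoin_list m [g] = g"
| "adjoin_list m (g # gs) = adjoin m g (adjoin_list m gs)"

end

theory Submission
  imports Defs
begin

definition til :: "nat set \<Rightarrow> nat set \<Rightarrow> bool" where
  "til X L \<longleftrightarrow> L \<inter> Suc ` L = {} \<and> L \<union> Suc ` L = X"

definition W :: "int \<Rightarrow> nat set \<Rightarrow> int" where
  "W c X = (\<Sum>L\<in>{L. til X L}. c ^ card L)"

lemma til_sub: "til X L \<Longrightarrow> L \<subseteq> X" unfolding til_def by blast

lemma fin_til: "finite X \<Longrightarrow> finite {L. til X L}"
  by (rule finite_subset[of _ "Pow X"]) (auto dest: til_sub)

lemma W0: "finite X \<Longrightarrow> W 0 X = (if X = {} then 1 else 0)"
proof -
  assume f: "finite X"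
  have "W 0 X = (\<Sum>L\<in>{L. til X L}. if L = {} then 1 else 0)"
    unfolding W_def
  proof (rule sum.cong)
    fix L assume "L \<in> {L. til X L}"
    then have "finite L" using til_sub f finite_subset by blast
    then show "0 ^ card L = (if L = {} then 1 else (0::int))" by (simp add: card_gt_0_iff)
  qed simp
  also have "\<dots> = (if til X {} then 1 else 0)"
    using fin_til[OF f] by (simp add: sum.delta)
  also have "til X {} \<longleftrightarrow> X = {}" by (auto simp: til_def)
  finally show ?thesis by simp
qed

lemma binom_pow:
  fixes a b :: int
  assumes "finite L"
  shows "(\<Sum>L2\<in>Pow L. a ^ card (L - L2) * b ^ card L2) = (a + b) ^ card L"
proof -
  have "(a + b) ^ card L = (\<Prod>x\<in>L. b + a)" by (simp add: add.commute)
  also have "\<dots> = (\<Sum>X\<in>Pow L. (\<Prod>x\<in>X. b) * (\<Prod>x\<in>L-X. a))"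
    by (rule prod_add[OF assms])
  also have "\<dots> = (\<Sum>L2\<in>Pow L. a ^ card (L - L2) * b ^ card L2)"
    by (rule sum.cong) (auto simp: mult.commute)
  finally show ?thesis by simp
qed

lemma W_conv:
  fixes a b :: int
  assumes fD: "finite D"
  shows "(\<Sum>V\<in>Pow D. W a (D - V) * W b V) = W (a + b) D"
proof -
  have fV: "V \<in> Pow D \<Longrightarrow> finite V" for V using fD finite_subset by auto
  have "(\<Sum>V\<in>Pow D. W a (D - V) * W b V)
      = (\<Sum>V\<in>Pow D. \<Sum>L1\<in>{L. til (D - V) L}. \<Sum>L2\<in>{L. til V L}. a ^ card L1 * b ^ card L2)"
    unfolding W_def by (simp add: sum_product)
  also have "\<dots> = (\<Sum>(V,L1,L2)\<in>(SIGMA V:Pow D. SIGMA L1:{L. til (D - V) L}. {L. til V L}). a ^ card L1 * b ^ card L2)"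
    by (simp add: sum.Sigma fin_til fV fD split_def)
  also have "\<dots> = (\<Sum>(L,L2)\<in>(SIGMA L:{L. til D L}. Pow L). a ^ card (L - L2) * b ^ card L2)"
    apply (rule sum.reindex_bij_witness[where i = "\<lambda>(L,L2). (L2 \<union> Suc ` L2, L - L2, L2)"
                                        and j = "\<lambda>(V,L1,L2). (L1 \<union> L2, L2)"])
        apply (auto simp: til_def)[4]
    apply clarify
    subgoal for V L1 L2
    proof -
      assume "til (D - V) L1" "til V L2"
      then have "L1 \<inter> L2 = {}" unfolding til_def by blast
      then have "L1 \<union> L2 - L2 = L1" by blast
      then show ?thesis by simp
    qed
    done
  also have "\<dots> = (\<Sum>L\<in>{L. til D L}. \<Sum>L2\<in>Pow L. a ^ card (L - L2) * b ^ card L2)"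
  proof -
    have "\<forall>L\<in>{L. til D L}. finite (Pow L)" using fD finite_subset by (auto dest: til_sub)
    then show ?thesis
      using sum.Sigma[of "{L. til D L}" Pow "\<lambda>L L2. a ^ card (L - L2) * b ^ card L2"]
      by (simp add: fin_til fD)
  qed
  also have "\<dots> = W (a + b) D"
    unfolding W_def
    by (rule sum.cong) (auto intro!: binom_pow dest!: til_sub intro: finite_subset[OF _ fD])
  finally show ?thesis .
qed

definition deg :: "sedge set \<Rightarrow> vtx \<Rightarrow> nat" where
  "deg F v = card {e\<in>F. v \<in> ends e}"

definition bnd :: "nat set \<Rightarrow> nat set \<Rightarrow> nat \<Rightarrow> vtx \<Rightarrow> nat" where
  "bnd A B N v = (if fst v \<in> A \<and> snd v = 1 then 1 else 0) + (if fst v \<in> B \<and> snd v = N then 1 else 0)"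

definition pm :: "nat \<Rightarrow> nat \<Rightarrow> sedge set \<Rightarrow> nat set \<Rightarrow> nat set \<Rightarrow> sedge set \<Rightarrow> bool" where
  "pm m N E A B F \<longleftrightarrow> F \<subseteq> E \<and> (\<forall>v\<in>{1..m}\<times>{1..N}. deg F v + bnd A B N v = 1)"

definition Tr :: "nat \<Rightarrow> nat \<Rightarrow> sedge set \<Rightarrow> nat set \<Rightarrow> nat set \<Rightarrow> int" where
  "Tr m N E A B = (\<Sum>F\<in>{F. pm m N E A B F}. \<Prod>e\<in>F. snd e)"

definition wfE :: "nat \<Rightarrow> nat \<Rightarrow> sedge set \<Rightarrow> bool" where
  "wfE m N E \<longleftrightarrow> finite E \<and> (\<forall>e\<in>E. ends e \<subseteq> {1..m}\<times>{1..N})"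

lemma fin_pm: "finite E \<Longrightarrow> finite {F. pm m N E A B F}"
  by (rule finite_subset[of _ "Pow E"]) (auto simp: pm_def)

lemma card_filter_image:
  assumes "inj_on f S"
  shows "card {i\<in>S. P (f i)} = card {e\<in>f ` S. P e}"
proof -
  have "{e\<in>f ` S. P e} = f ` {i\<in>S. P (f i)}" by auto
  moreover have "inj_on f {i\<in>S. P (f i)}" using assms by (rule inj_on_subset) auto
  ultimately show ?thesis by (simp add: card_image)
qed

lemma Mat_Tr:
  assumes d: "distinct (sedges g)" and w: "\<forall>e\<in>set (sedges g). ends e \<subseteq> verts m g"
  shows "Mat m g = Tr m (ncols g) (set (sedges g)) {} {}"
proof -
  let ?es = "sedges g"
  have inj: "inj_on (nth ?es) S" if "S \<subseteq> {..<length ?es}" for S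
    using d that by (simp add: inj_on_def nth_eq_iff_index_eq subset_iff)
  have bnd0: "bnd {} {} N v = 0" for N v by (simp add: bnd_def)
  have vg: "verts m g = {1..m}\<times>{1..ncols g}" by (simp add: verts_def)
  show ?thesis
    unfolding Mat_def Tr_def
  proof (rule sum.reindex_bij_witness[where j = "\<lambda>S. nth ?es ` S" and i = "\<lambda>F. {i. i < length ?es \<and> ?es ! i \<in> F}"])
    fix S assume "S \<in> {S. perfect_matching m g S}"
    then have S: "S \<subseteq> {..<length ?es}" "\<forall>v\<in>verts m g. card {i\<in>S. v \<in> ends (?es ! i)} = 1"
      by (auto simp: perfect_matching_def)
    show "{i. i < length ?es \<and> ?es ! i \<in> nth ?es ` S} = S"
      using S(1) d by (auto simp: nth_eq_iff_index_eq subset_iff)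
    show "nth ?es ` S \<in> {F. pm m (ncols g) (set ?es) {} {} F}"
      using S card_filter_image[OF inj[OF S(1)], of "\<lambda>e. _ \<in> ends e"]
      by (auto simp: pm_def deg_def bnd0 vg subset_iff)
    show "(\<Prod>e\<in>nth ?es ` S. snd e) = (\<Prod>i\<in>S. snd (?es ! i))"
      using prod.reindex[OF inj[OF S(1)], of snd] by simp
  next
    fix F assume "F \<in> {F. pm m (ncols g) (set ?es) {} {} F}"
    then have F: "F \<subseteq> set ?es" "\<forall>v\<in>{1..m}\<times>{1..ncols g}. deg F v = 1"
      by (auto simp: pm_def bnd0)
    have im: "nth ?es ` {i. i < length ?es \<and> ?es ! i \<in> F} = F"
    proof (intro equalityI subsetI)
      fix e assume "e \<in> F"
      then have "e \<in> set ?es" using F(1) by auto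
      then obtain i where "i < length ?es" "?es ! i = e" by (auto simp: in_set_conv_nth)
      then show "e \<in> nth ?es ` {i. i < length ?es \<and> ?es ! i \<in> F}" using \<open>e \<in> F\<close> by force
    qed auto
    show "nth ?es ` {i. i < length ?es \<and> ?es ! i \<in> F} = F" by (rule im)
    have sub: "{i. i < length ?es \<and> ?es ! i \<in> F} \<subseteq> {..<length ?es}" by auto
    show "{i. i < length ?es \<and> ?es ! i \<in> F} \<in> {S. perfect_matching m g S}"
      unfolding perfect_matching_def
    proof (intro CollectI conjI ballI)
      show "{i. i < length ?es \<and> ?es ! i \<in> F} \<subseteq> {..<length ?es}" by (rule sub)
      fix i assume "i \<in> {i. i < length ?es \<and> ?es ! i \<in> F}"
      then show "ends (?es ! i) \<subseteq> verts m g" using w by auto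
    next
      fix v assume v: "v \<in> verts m g"
      have "card {i \<in> {i. i < length ?es \<and> ?es ! i \<in> F}. v \<in> ends (?es ! i)} = deg F v"
        unfolding deg_def using card_filter_image[OF inj[OF sub], of "\<lambda>e. v \<in> ends e"] im by simp
      then show "card {i \<in> {i. i < length ?es \<and> ?es ! i \<in> F}. v \<in> ends (?es ! i)} = 1"
        using F(2) v vg by (metis (no_types, lifting))
    qed
  qed
qed

definition jn :: "nat \<Rightarrow> nat \<Rightarrow> sedge" where
  "jn N1 i = (((i,N1),(i,N1+1)),1)"

definition AdjE :: "nat \<Rightarrow> nat \<Rightarrow> sedge set \<Rightarrow> sedge set \<Rightarrow> sedge set" where
  "AdjE m N1 E1 E2 = E1 \<union> shift_edge N1 ` E2 \<union> jn N1 ` {1..m}"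

lemma ends_shift: "ends (shift_edge k e) = (\<lambda>(r,c). (r, c+k)) ` ends e"
  by (cases e) (auto simp: shift_edge_def ends_def)

lemma snd_shift[simp]: "snd (shift_edge k e) = snd e"
  by (cases e) (auto simp: shift_edge_def)

lemma inj_shift: "inj (shift_edge k)"
  unfolding inj_def shift_edge_def by (auto split: prod.splits)

lemma ends_jn: "ends (jn N1 i) = {(i,N1),(i,N1+1)}"
  by (simp add: jn_def ends_def)

lemma inj_jn: "inj (jn N1)" unfolding inj_def jn_def by auto

lemma deg_Un: "finite X \<Longrightarrow> finite Y \<Longrightarrow> X \<inter> Y = {} \<Longrightarrow> deg (X \<union> Y) v = deg X v + deg Y v"
proof -
  assume a: "finite X" "finite Y" "X \<inter> Y = {}"
  have "{e\<in>X \<union> Y. v \<in> ends e} = {e\<in>X. v \<in> ends e} \<union> {e\<in>Y. v \<in> ends e}" by auto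
  then show ?thesis unfolding deg_def using a by (simp add: card_Un_disjoint disjoint_iff)
qed

lemma deg_shift: "deg (shift_edge k ` F) (r, c + k) = deg F (r, c)"
proof -
  have "{e\<in>shift_edge k ` F. (r, c+k) \<in> ends e} = shift_edge k ` {e\<in>F. (r,c) \<in> ends e}"
    by (auto simp: ends_shift)
  then show ?thesis unfolding deg_def
    by (simp add: card_image inj_on_subset[OF inj_shift])
qed

lemma deg_zero: "(\<forall>e\<in>F. v \<notin> ends e) \<Longrightarrow> deg F v = 0"
proof -
  assume "\<forall>e\<in>F. v \<notin> ends e"
  then have "{e\<in>F. v \<in> ends e} = {}" by auto
  then show ?thesis unfolding deg_def by (metis card.empty)
qed

lemma deg_jn: "C \<subseteq> {1..m} \<Longrightarrow> deg (jn N1 ` C) (r,c) = (if r \<in> C \<and> (c = N1 \<or> c = N1 + 1) then 1 else 0)"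
proof -
  have "{e\<in>jn N1 ` C. (r,c) \<in> ends e} = (if r \<in> C \<and> (c = N1 \<or> c = N1 + 1) then {jn N1 r} else {})"
    by (auto simp: ends_jn)
  then show ?thesis unfolding deg_def by simp
qed

lemma pm_adj_iff:
  assumes w1: "wfE m N1 E1" and w2: "wfE m N2 E2" and N1: "N1 \<ge> 1" and N2: "N2 \<ge> 1"
    and F1: "F1 \<subseteq> E1" and F2: "F2 \<subseteq> E2" and C: "C \<subseteq> {1..m}"
  shows "pm m (N1+N2) (AdjE m N1 E1 E2) A B (F1 \<union> shift_edge N1 ` F2 \<union> jn N1 ` C)
     \<longleftrightarrow> pm m N1 E1 A C F1 \<and> pm m N2 E2 C B F2"
proof -
  have f1: "finite F1" using w1 F1 finite_subset unfolding wfE_def by blast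
  have f2: "finite F2" using w2 F2 finite_subset unfolding wfE_def by blast
  have fC: "finite C" using C finite_subset by blast
  have e1: "\<forall>e\<in>F1. ends e \<subseteq> {1..m}\<times>{1..N1}" using w1 F1 unfolding wfE_def by blast
  have e2: "\<forall>e\<in>F2. ends e \<subseteq> {1..m}\<times>{1..N2}" using w2 F2 unfolding wfE_def by blast
  have d12: "F1 \<inter> shift_edge N1 ` F2 = {}"
  proof -
    { fix e assume "e \<in> F1" "e \<in> shift_edge N1 ` F2"
      then obtain e' where e': "e' \<in> F2" "e = shift_edge N1 e'" by auto
      define v where "v = fst (fst e')"
      have v: "v \<in> ends e'" unfolding ends_def v_def by auto
      have "(fst v, snd v + N1) \<in> ends e" using v e' by (force simp: ends_shift)
      moreover have "v \<in> {1..m}\<times>{1..N2}" using e2 e' v by blast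
      then have "snd v \<ge> 1" by auto
      ultimately have False using e1 \<open>e \<in> F1\<close> by force }
    then show ?thesis by blast
  qed
  have d3: "(F1 \<union> shift_edge N1 ` F2) \<inter> jn N1 ` C = {}"
  proof -
    { fix i assume i: "jn N1 i \<in> F1 \<union> shift_edge N1 ` F2"
      have False
      proof (cases "jn N1 i \<in> F1")
        case True
        then show False using e1 by (force simp: ends_jn)
      next
        case False
        then obtain e' where e': "e' \<in> F2" "jn N1 i = shift_edge N1 e'" using i by auto
        then have "(i,N1) \<in> ends (shift_edge N1 e')" by (metis ends_jn insertI1)
        then show False using e2 e' by (force simp: ends_shift)
      qed }
    note X = this
    show ?thesis
    proof (intro equalityI subsetI)
      fix e assume "e \<in> (F1 \<union> shift_edge N1 ` F2) \<inter> jn N1 ` C"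
      then have a: "e \<in> jn N1 ` C" "e \<in> F1 \<union> shift_edge N1 ` F2" by auto
      from a(1) obtain i where "e = jn N1 i" by (rule imageE)
      then show "e \<in> {}" using X a(2) by simp
    qed simp
  qed
  let ?F = "F1 \<union> shift_edge N1 ` F2 \<union> jn N1 ` C"
  have degF: "deg ?F v = deg F1 v + deg (shift_edge N1 ` F2) v + deg (jn N1 ` C) v" for v
    using d12 d3 f1 f2 fC by (simp add: deg_Un)
  have left: "deg ?F (r,c) + bnd A B (N1+N2) (r,c) = deg F1 (r,c) + bnd A C N1 (r,c)"
    if "r \<in> {1..m}" "c \<in> {1..N1}" for r c
  proof -
    have "deg (shift_edge N1 ` F2) (r,c) = 0"
      using e2 that by (intro deg_zero) (force simp: ends_shift)
    then show ?thesis using that N2 C by (auto simp: degF deg_jn bnd_def)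
  qed
  have right: "deg ?F (r,c + N1) + bnd A B (N1+N2) (r,c + N1) = deg F2 (r,c) + bnd C B N2 (r,c)"
    if "r \<in> {1..m}" "c \<in> {1..N2}" for r c
  proof -
    have "deg F1 (r,c+N1) = 0"
      using e1 that by (intro deg_zero) force
    then show ?thesis using that N1 C by (auto simp: degF deg_jn bnd_def deg_shift)
  qed
  have split: "(\<forall>v\<in>{1..m}\<times>{1..N1+N2}. P v) \<longleftrightarrow>
      (\<forall>r\<in>{1..m}. \<forall>c\<in>{1..N1}. P (r,c)) \<and> (\<forall>r\<in>{1..m}. \<forall>c\<in>{1..N2}. P (r, c + N1))" for P
  proof (rule iffI)
    assume "\<forall>v\<in>{1..m}\<times>{1..N1+N2}. P v"
    then show "(\<forall>r\<in>{1..m}. \<forall>c\<in>{1..N1}. P (r,c)) \<and> (\<forall>r\<in>{1..m}. \<forall>c\<in>{1..N2}. P (r, c + N1))"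
      using N1 by auto
  next
    assume a: "(\<forall>r\<in>{1..m}. \<forall>c\<in>{1..N1}. P (r,c)) \<and> (\<forall>r\<in>{1..m}. \<forall>c\<in>{1..N2}. P (r, c + N1))"
    show "\<forall>v\<in>{1..m}\<times>{1..N1+N2}. P v"
    proof
      fix v assume rc: "v \<in> {1..m}\<times>{1..N1+N2}"
      obtain r c where v: "v = (r,c)" by force
      show "P v"
      proof (cases "c \<le> N1")
        case True then show ?thesis using a rc v by auto
      next
        case False
        then have "c - N1 \<in> {1..N2}" "c = (c - N1) + N1" using rc v by auto
        then show ?thesis using a rc v by (metis SigmaE2)
      qed
    qed
  qed
  have sub: "?F \<subseteq> AdjE m N1 E1 E2 \<longleftrightarrow> True" using F1 F2 C by (auto simp: AdjE_def)
  show ?thesis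
    unfolding pm_def split using sub F1 F2 left right by auto
qed

lemma adj_disj:
  assumes w1: "wfE m N1 E1" and w2: "wfE m N2 E2"
  shows "E1 \<inter> shift_edge N1 ` E2 = {}" "jn N1 i \<notin> E1" "jn N1 i \<notin> shift_edge N1 ` E2"
proof -
  have e1: "\<forall>e\<in>E1. ends e \<subseteq> {1..m}\<times>{1..N1}" using w1 unfolding wfE_def by blast
  have e2: "\<forall>e\<in>E2. ends e \<subseteq> {1..m}\<times>{1..N2}" using w2 unfolding wfE_def by blast
  { fix e assume "e \<in> E1" "e \<in> shift_edge N1 ` E2"
    then obtain e' where e': "e' \<in> E2" "e = shift_edge N1 e'" by auto
    define v where "v = fst (fst e')"
    have v: "v \<in> ends e'" unfolding ends_def v_def by auto
    have "(fst v, snd v + N1) \<in> ends e" using v e' by (force simp: ends_shift)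
    moreover have "v \<in> {1..m}\<times>{1..N2}" using e2 e' v by blast
    then have "snd v \<ge> 1" by auto
    ultimately have False using e1 \<open>e \<in> E1\<close> by force }
  then show "E1 \<inter> shift_edge N1 ` E2 = {}" by blast
  show "jn N1 i \<notin> E1" using e1 by (force simp: ends_jn)
  show "jn N1 i \<notin> shift_edge N1 ` E2"
  proof
    assume "jn N1 i \<in> shift_edge N1 ` E2"
    then obtain e' where e': "e' \<in> E2" "jn N1 i = shift_edge N1 e'" by auto
    then have "(i,N1) \<in> ends (shift_edge N1 e')" by (metis ends_jn insertI1)
    then show False using e2 e' by (force simp: ends_shift)
  qed
qed

lemma img_disj: "(\<And>r. f r \<notin> X) \<Longrightarrow> X \<inter> f ` C = {}" by blast

lemma adj_Tr:
  assumes w1: "wfE m N1 E1" and w2: "wfE m N2 E2" and N1: "N1 \<ge> 1" and N2: "N2 \<ge> 1"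
  shows "Tr m (N1+N2) (AdjE m N1 E1 E2) A B = (\<Sum>C\<in>Pow {1..m}. Tr m N1 E1 A C * Tr m N2 E2 C B)"
proof -
  have fE1: "finite E1" and fE2: "finite E2" using w1 w2 by (auto simp: wfE_def)
  note dj = adj_disj[OF w1 w2]
  have fP: "finite (Pow {1..m::nat})" by simp
  let ?S = "SIGMA C:Pow {1..m}. SIGMA F1:{F. pm m N1 E1 A C F}. {F. pm m N2 E2 C B F}"
  have "(\<Sum>C\<in>Pow {1..m}. Tr m N1 E1 A C * Tr m N2 E2 C B)
     = (\<Sum>C\<in>Pow {1..m}. \<Sum>F1\<in>{F. pm m N1 E1 A C F}. \<Sum>F2\<in>{F. pm m N2 E2 C B F}. (\<Prod>e\<in>F1. snd e) * (\<Prod>e\<in>F2. snd e))"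
    unfolding Tr_def by (simp add: sum_product)
  also have "\<dots> = (\<Sum>C\<in>Pow {1..m}. \<Sum>(F1,F2)\<in>(SIGMA F1:{F. pm m N1 E1 A C F}. {F. pm m N2 E2 C B F}). (\<Prod>e\<in>F1. snd e) * (\<Prod>e\<in>F2. snd e))"
    by (rule sum.cong[OF refl], rule sum.Sigma) (auto simp: fin_pm fE1 fE2)
  also have "\<dots> = (\<Sum>(C,F1,F2)\<in>?S. (\<Prod>e\<in>F1. snd e) * (\<Prod>e\<in>F2. snd e))"
    by (subst sum.Sigma) (auto simp: fin_pm fE1 fE2 split_def intro!: finite_SigmaI)
  also have "\<dots> = Tr m (N1+N2) (AdjE m N1 E1 E2) A B"
    unfolding Tr_def
  proof (rule sum.reindex_bij_witness[where j = "\<lambda>(C,F1,F2). F1 \<union> shift_edge N1 ` F2 \<union> jn N1 ` C"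
        and i = "\<lambda>F. ({r\<in>{1..m}. jn N1 r \<in> F}, F \<inter> E1, {e\<in>E2. shift_edge N1 e \<in> F})"])
    fix a assume a: "a \<in> ?S"
    then obtain C F1 F2 where aa: "a = (C,F1,F2)" "C \<subseteq> {1..m}" "pm m N1 E1 A C F1" "pm m N2 E2 C B F2"
      by auto
    then have F1: "F1 \<subseteq> E1" and F2: "F2 \<subseteq> E2" by (auto simp: pm_def)
    have n1: "jn N1 r \<notin> F1" "jn N1 r \<notin> shift_edge N1 ` F2" for r
      using dj(2,3)[of r] F1 F2 by blast+
    have i1: "{r\<in>{1..m}. jn N1 r \<in> F1 \<union> shift_edge N1 ` F2 \<union> jn N1 ` C} = C"
      using aa(2) inj_jn[of N1] n1 by (auto simp: inj_eq)
    have i2: "(F1 \<union> shift_edge N1 ` F2 \<union> jn N1 ` C) \<inter> E1 = F1"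
      using F1 F2 dj by blast
    have i3: "{e\<in>E2. shift_edge N1 e \<in> F1 \<union> shift_edge N1 ` F2 \<union> jn N1 ` C} = F2"
    proof -
      have ne: "e \<in> E2 \<Longrightarrow> shift_edge N1 e \<notin> jn N1 ` C" for e by (metis dj(3) imageE rev_image_eqI)
      show ?thesis
      proof (intro equalityI subsetI)
        fix e assume "e \<in> {e\<in>E2. shift_edge N1 e \<in> F1 \<union> shift_edge N1 ` F2 \<union> jn N1 ` C}"
        then have e: "e \<in> E2" "shift_edge N1 e \<in> F1 \<union> shift_edge N1 ` F2 \<union> jn N1 ` C" by auto
        have "shift_edge N1 e \<notin> F1" using e(1) F1 dj(1) by blast
        moreover have "shift_edge N1 e \<notin> jn N1 ` C" using ne e(1) by blast
        ultimately have "shift_edge N1 e \<in> shift_edge N1 ` F2" using e(2) by blast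
        then show "e \<in> F2" using inj_shift[of N1] by (simp add: inj_image_mem_iff)
      qed (use F2 in auto)
    qed
    show "(case case a of (C, F1, F2) \<Rightarrow> F1 \<union> shift_edge N1 ` F2 \<union> jn N1 ` C of
           F \<Rightarrow> ({r \<in> {1..m}. jn N1 r \<in> F}, F \<inter> E1, {e \<in> E2. shift_edge N1 e \<in> F})) = a"
      using aa i1 i2 i3 by simp
    show "(case a of (C, F1, F2) \<Rightarrow> F1 \<union> shift_edge N1 ` F2 \<union> jn N1 ` C) \<in> {F. pm m (N1 + N2) (AdjE m N1 E1 E2) A B F}"
      using aa pm_adj_iff[OF w1 w2 N1 N2 F1 F2 aa(2)] by simp
    have fF1: "finite F1" using F1 fE1 finite_subset by blast
    have fF2: "finite F2" using F2 fE2 finite_subset by blast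
    have "(\<Prod>e\<in>F1 \<union> shift_edge N1 ` F2 \<union> jn N1 ` C. snd e)
        = (\<Prod>e\<in>F1 \<union> shift_edge N1 ` F2. snd e) * (\<Prod>e\<in>jn N1 ` C. snd e)"
    proof (rule prod.union_disjoint)
      show "(F1 \<union> shift_edge N1 ` F2) \<inter> jn N1 ` C = {}" by (rule img_disj) (use n1 in blast)
    qed (use fF1 fF2 aa(2) in \<open>auto intro: finite_subset\<close>)
    also have "(\<Prod>e\<in>jn N1 ` C. snd e) = 1" by (rule prod.neutral) (auto simp: jn_def)
    also have "(\<Prod>e\<in>F1 \<union> shift_edge N1 ` F2. snd e) = (\<Prod>e\<in>F1. snd e) * (\<Prod>e\<in>shift_edge N1 ` F2. snd e)"
      by (rule prod.union_disjoint) (use fF1 fF2 F1 F2 dj in auto)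
    also have "(\<Prod>e\<in>shift_edge N1 ` F2. snd e) = (\<Prod>e\<in>F2. snd e)"
      using prod.reindex[OF inj_on_subset[OF inj_shift[of N1]], of F2 snd] by simp
    finally show "(\<Prod>e\<in>(case a of (C, F1, F2) \<Rightarrow> F1 \<union> shift_edge N1 ` F2 \<union> jn N1 ` C). snd e) =
         (case a of (C, F1, F2) \<Rightarrow> (\<Prod>e\<in>F1. snd e) * (\<Prod>e\<in>F2. snd e))"
      using aa by simp
  next
    fix F assume "F \<in> {F. pm m (N1 + N2) (AdjE m N1 E1 E2) A B F}"
    then have F: "pm m (N1 + N2) (AdjE m N1 E1 E2) A B F" by simp
    then have FA: "F \<subseteq> AdjE m N1 E1 E2" by (simp add: pm_def)
    let ?C = "{r\<in>{1..m}. jn N1 r \<in> F}" and ?F1 = "F \<inter> E1" and ?F2 = "{e\<in>E2. shift_edge N1 e \<in> F}"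
    have dec: "?F1 \<union> shift_edge N1 ` ?F2 \<union> jn N1 ` ?C = F"
      using FA unfolding AdjE_def by blast
    show "(case ({r \<in> {1..m}. jn N1 r \<in> F}, F \<inter> E1, {e \<in> E2. shift_edge N1 e \<in> F}) of
           (C, F1, F2) \<Rightarrow> F1 \<union> shift_edge N1 ` F2 \<union> jn N1 ` C) = F"
      using dec by simp
    have "pm m N1 E1 A ?C ?F1 \<and> pm m N2 E2 ?C B ?F2"
    proof -
      have s1: "?F1 \<subseteq> E1" and s2: "?F2 \<subseteq> E2" and s3: "?C \<subseteq> {1..m}" by auto
      have "pm m (N1 + N2) (AdjE m N1 E1 E2) A B (?F1 \<union> shift_edge N1 ` ?F2 \<union> jn N1 ` ?C)"
        using F dec by simp
      then show ?thesis using pm_adj_iff[OF w1 w2 N1 N2 s1 s2 s3] by blast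
    qed
    then show "({r \<in> {1..m}. jn N1 r \<in> F}, F \<inter> E1, {e \<in> E2. shift_edge N1 e \<in> F}) \<in> ?S"
      by auto
  qed
  finally show ?thesis by simp
qed

type_synonym mat = "nat set \<Rightarrow> nat set \<Rightarrow> int"

definition mm :: "nat \<Rightarrow> mat \<Rightarrow> mat \<Rightarrow> mat" where
  "mm m X Y = (\<lambda>A B. if A \<subseteq> {1..m} \<and> B \<subseteq> {1..m} then (\<Sum>C\<in>Pow {1..m}. X A C * Y C B) else 0)"

definition rs :: "nat \<Rightarrow> mat \<Rightarrow> mat" where
  "rs m X = (\<lambda>A B. if A \<subseteq> {1..m} \<and> B \<subseteq> {1..m} then X A B else 0)"

definition idm :: "nat \<Rightarrow> mat" where
  "idm m = (\<lambda>A B. if A \<subseteq> {1..m} \<and> B \<subseteq> {1..m} \<and> A = B then 1 else 0)"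

lemma mm_assoc: "mm m (mm m X Y) Z = mm m X (mm m Y Z)"
proof (intro ext)
  fix A B
  show "mm m (mm m X Y) Z A B = mm m X (mm m Y Z) A B"
  proof (cases "A \<subseteq> {1..m} \<and> B \<subseteq> {1..m}")
    case True
    have "mm m (mm m X Y) Z A B = (\<Sum>C\<in>Pow {1..m}. (\<Sum>D\<in>Pow {1..m}. X A D * Y D C) * Z C B)"
      using True by (auto simp: mm_def intro!: sum.cong)
    also have "\<dots> = (\<Sum>C\<in>Pow {1..m}. \<Sum>D\<in>Pow {1..m}. X A D * Y D C * Z C B)"
      by (simp add: sum_distrib_right)
    also have "\<dots> = (\<Sum>D\<in>Pow {1..m}. \<Sum>C\<in>Pow {1..m}. X A D * Y D C * Z C B)"
      by (rule sum.swap)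
    also have "\<dots> = (\<Sum>D\<in>Pow {1..m}. X A D * (\<Sum>C\<in>Pow {1..m}. Y D C * Z C B))"
      by (simp add: sum_distrib_left mult.assoc)
    also have "\<dots> = mm m X (mm m Y Z) A B"
      using True by (auto simp: mm_def intro!: sum.cong)
    finally show ?thesis .
  qed (auto simp: mm_def)
qed

lemma mm_rs_l[simp]: "mm m (rs m X) Y = mm m X Y"
  unfolding mm_def rs_def by (intro ext) (auto intro!: sum.cong)

lemma mm_rs_r[simp]: "mm m X (rs m Y) = mm m X Y"
  unfolding mm_def rs_def by (intro ext) (auto intro!: sum.cong)

lemma rs_mm[simp]: "rs m (mm m X Y) = mm m X Y"
  unfolding mm_def rs_def by (intro ext) auto

lemma rs_idm[simp]: "rs m (idm m) = idm m"
  unfolding idm_def rs_def by (intro ext) auto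

lemma rs_rs[simp]: "rs m (rs m X) = rs m X"
  unfolding rs_def by (intro ext) auto

lemma mm_id_l[simp]: "mm m (idm m) X = rs m X"
proof (intro ext)
  fix A B
  show "mm m (idm m) X A B = rs m X A B"
  proof (cases "A \<subseteq> {1..m} \<and> B \<subseteq> {1..m}")
    case True
    then have "mm m (idm m) X A B = (\<Sum>C\<in>Pow {1..m}. (if A = C then 1 else 0) * X C B)"
      by (auto simp: mm_def idm_def intro!: sum.cong)
    also have "\<dots> = (\<Sum>C\<in>Pow {1..m}. if A = C then X C B else 0)"
      by (rule sum.cong) auto
    also have "\<dots> = X A B" using True by (simp add: sum.delta)
    finally show ?thesis using True by (simp add: rs_def)
  qed (auto simp: mm_def rs_def)
qed

lemma mm_id_r[simp]: "mm m X (idm m) = rs m X"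
proof (intro ext)
  fix A B
  show "mm m X (idm m) A B = rs m X A B"
  proof (cases "A \<subseteq> {1..m} \<and> B \<subseteq> {1..m}")
    case True
    then have "mm m X (idm m) A B = (\<Sum>C\<in>Pow {1..m}. X A C * (if C = B then 1 else 0))"
      by (auto simp: mm_def idm_def intro!: sum.cong)
    also have "\<dots> = (\<Sum>C\<in>Pow {1..m}. if C = B then X A C else 0)"
      by (rule sum.cong) auto
    also have "\<dots> = X A B" using True by (simp add: sum.delta')
    finally show ?thesis using True by (simp add: rs_def)
  qed (auto simp: mm_def rs_def)
qed

fun pow :: "nat \<Rightarrow> mat \<Rightarrow> nat \<Rightarrow> mat" where
  "pow m X 0 = idm m"
| "pow m X (Suc n) = mm m X (pow m X n)"

lemma rs_pow[simp]: "rs m (pow m X n) = pow m X n"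
  by (cases n) auto

lemma pow_add: "pow m X (a + b) = mm m (pow m X a) (pow m X b)"
  by (induction a) (auto simp: mm_assoc)

lemma pow_1: "pow m X 1 = rs m X" by simp

lemma pow_Suc': "pow m X (Suc n) = mm m (pow m X n) X"
  using pow_add[of m X n 1] by simp

lemma pow_cancel:
  assumes "mm m X Y = idm m"
  shows "mm m (pow m X n) (pow m Y n) = idm m"
proof (induction n)
  case 0 then show ?case by simp
next
  case (Suc n)
  have "mm m (pow m X (Suc n)) (pow m Y (Suc n)) = mm m (mm m (pow m X n) X) (mm m Y (pow m Y n))"
    by (simp only: pow_Suc'[of m X n] pow.simps(2)[of m Y n])
  also have "\<dots> = mm m (pow m X n) (mm m (mm m X Y) (pow m Y n))"
    by (simp only: mm_assoc)
  also have "\<dots> = idm m" using Suc assms by simp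
  finally show ?case .
qed

lemma pow_cancel1:
  assumes "mm m X Y = idm m"
  shows "mm m (pow m X (n + k)) (pow m Y n) = pow m X k"
proof -
  have "pow m X (n + k) = mm m (pow m X k) (pow m X n)" by (metis add.commute pow_add)
  then show ?thesis using pow_cancel[OF assms] by (simp add: mm_assoc)
qed

lemma pow_cancel2:
  assumes "mm m X Y = idm m"
  shows "mm m (pow m X n) (pow m Y (n + k)) = pow m Y k"
proof -
  have "pow m Y (n + k) = mm m (pow m Y n) (pow m Y k)" by (rule pow_add)
  then show ?thesis using pow_cancel[OF assms] by (simp flip: mm_assoc)
qed

definition pw :: "nat \<Rightarrow> mat \<Rightarrow> mat \<Rightarrow> int \<Rightarrow> mat" where
  "pw m P Q k = (if k \<ge> 0 then pow m P (nat k) else pow m Q (nat (-k)))"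

lemma pw_add:
  assumes PQ: "mm m P Q = idm m" and QP: "mm m Q P = idm m"
  shows "mm m (pw m P Q a) (pw m P Q b) = pw m P Q (a + b)"
proof (cases "a \<ge> 0")
  case a: True
  show ?thesis
  proof (cases "b \<ge> 0")
    case True
    then show ?thesis using a by (simp add: pw_def pow_add[symmetric] nat_add_distrib)
  next
    case b: False
    show ?thesis
    proof (cases "a + b \<ge> 0")
      case True
      have "nat a = nat (-b) + nat (a + b)" using a b True by simp
      then show ?thesis using a b True pow_cancel1[OF PQ, of "nat (-b)" "nat (a+b)"] by (simp add: pw_def)
    next
      case False
      have "nat (-b) = nat a + nat (-(a + b))" using a b False by simp
      then show ?thesis using a b False pow_cancel2[OF PQ, of "nat a" "nat (-(a+b))"] by (simp add: pw_def)
    qed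
  qed
next
  case a: False
  show ?thesis
  proof (cases "b \<ge> 0")
    case b: True
    show ?thesis
    proof (cases "a + b \<ge> 0")
      case True
      have "nat b = nat (-a) + nat (a + b)" using a b True by simp
      then show ?thesis using a b True pow_cancel2[OF QP, of "nat (-a)" "nat (a+b)"] by (simp add: pw_def)
    next
      case False
      have "nat (-a) = nat b + nat (-(a + b))" using a b False by simp
      then show ?thesis using a b False pow_cancel1[OF QP, of "nat b" "nat (-(a+b))"] by (simp add: pw_def)
    qed
  next
    case False
    then have "nat (-(a+b)) = nat (-a) + nat (-b)" using a by simp
    then show ?thesis using a False by (simp add: pw_def pow_add[symmetric])
  qed
qed

definition hS :: "nat \<Rightarrow> nat set \<Rightarrow> sedge set" where
  "hS m J = (\<lambda>(i,j). (((i,j),(i,j+1)),1)) ` ({1..m} \<times> J)"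

definition vS :: "nat \<Rightarrow> nat set \<Rightarrow> int \<Rightarrow> sedge set" where
  "vS m J s = (\<lambda>(i,j). (((i,j),(i+1,j)),s)) ` ({1..<m} \<times> J)"

lemma set_hedges: "set (hedges m N) = hS m {1..<N}"
  unfolding hedges_def hS_def by auto

lemma set_vedges: "set (vedges m cols s) = vS m (set cols) s"
  unfolding vedges_def vS_def by auto

lemma hedges_prod: "hedges m N = map (\<lambda>(i,j). (((i,j),(i,j+1)),1)) (List.product [1..<m+1] [1..<N])"
  unfolding hedges_def by (simp add: product_concat_map map_concat comp_def)

lemma vedges_prod: "vedges m cols s = map (\<lambda>(i,j). (((i,j),(i+1,j)),s)) (List.product [1..<m] cols)"
  unfolding vedges_def by (simp add: product_concat_map map_concat comp_def)

lemma distinct_hedges: "distinct (hedges m N)"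
  unfolding hedges_prod by (auto simp: distinct_map distinct_product inj_on_def)

lemma distinct_vedges: "distinct cols \<Longrightarrow> distinct (vedges m cols s)"
  unfolding vedges_prod by (auto simp: distinct_map distinct_product inj_on_def)

definition ved :: "int \<Rightarrow> nat \<Rightarrow> sedge" where
  "ved s i = (((i,1),(i+1,1)),s)"

lemma inj_ved: "inj (ved s)" unfolding inj_def ved_def by auto

lemma ends_ved: "ends (ved s i) = {(i,1),(Suc i,1)}" by (simp add: ved_def ends_def)

lemma vS1: "vS m {1} s = ved s ` {1..<m}"
  unfolding vS_def ved_def by auto

definition col :: "nat \<Rightarrow> int \<Rightarrow> mat" where
  "col m s = (\<lambda>A B. if A \<subseteq> {1..m} \<and> B \<subseteq> {1..m} \<and> A \<inter> B = {} then W s ({1..m} - A - B) else 0)"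

definition ecol :: "nat \<Rightarrow> mat" where
  "ecol m = (\<lambda>A B. if A \<subseteq> {1..m} \<and> B \<subseteq> {1..m} \<and> A \<inter> B = {} \<and> A \<union> B = {1..m} then 1 else 0)"

lemma deg_ved: "deg (ved s ` L) (r, 1) = (if r \<in> L then 1 else 0) + (if r \<in> Suc ` L then 1 else 0)"
proof -
  have "{e\<in>ved s ` L. (r,1) \<in> ends e} = ved s ` ({i\<in>L. i = r} \<union> {i\<in>L. Suc i = r})"
    by (auto simp: ends_ved)
  then have "deg (ved s ` L) (r, 1) = card ({i\<in>L. i = r} \<union> {i\<in>L. Suc i = r})"
    unfolding deg_def by (simp add: card_image inj_on_subset[OF inj_ved])
  also have "\<dots> = card {i\<in>L. i = r} + card {i\<in>L. Suc i = r}"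
    by (rule card_Un_disjoint) (auto intro: finite_subset[of _ "{r}"] finite_subset[of _ "{r - 1}"])
  also have "{i\<in>L. i = r} = (if r \<in> L then {r} else {})" by auto
  also have "{i\<in>L. Suc i = r} = (if r \<in> Suc ` L then {r - 1} else {})" by auto
  finally show ?thesis by simp
qed

lemma deg_ved': "deg (ved s ` L) (r, Suc 0) = (if r \<in> L then 1 else 0) + (if r \<in> Suc ` L then 1 else 0)"
  using deg_ved[of s L r] by simp

lemma one4: "((if a then 1 else 0) + (if b then 1 else 0) + (if c then 1 else 0) + (if d then 1 else (0::nat)) = 1)
   \<longleftrightarrow> (a \<and> \<not>b \<and> \<not>c \<and> \<not>d) \<or> (\<not>a \<and> b \<and> \<not>c \<and> \<not>d) \<or> (\<not>a \<and> \<not>b \<and> c \<and> \<not>d) \<or> (\<not>a \<and> \<not>b \<and> \<not>c \<and> d)"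
  by auto

lemma pm_col_iff:
  assumes A: "A \<subseteq> {1..m}" and B: "B \<subseteq> {1..m}" and L: "L \<subseteq> {1..<m}"
  shows "pm m 1 (vS m {1} s) A B (ved s ` L) \<longleftrightarrow> A \<inter> B = {} \<and> til ({1..m} - A - B) L"
proof -
  have SL: "Suc ` L \<subseteq> {1..m}" using L by auto
  have L': "L \<subseteq> {1..m}" using L by auto
  have "pm m 1 (vS m {1} s) A B (ved s ` L) \<longleftrightarrow>
     (\<forall>r\<in>{1..m}. (if r \<in> L then 1 else 0) + (if r \<in> Suc ` L then 1 else 0) +
        (if r \<in> A then 1 else 0) + (if r \<in> B then 1 else (0::nat)) = 1)"
  proof -
    have s1: "ved s ` L \<subseteq> vS m {1} s" unfolding vS1 using L by auto
    have "pm m 1 (vS m {1} s) A B (ved s ` L) \<longleftrightarrow>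
       (\<forall>r\<in>{1..m}. deg (ved s ` L) (r,1) + bnd A B 1 (r,1) = 1)"
      unfolding pm_def using s1 by auto
    then show ?thesis by (simp add: deg_ved' bnd_def add.assoc)
  qed
  also have "\<dots> \<longleftrightarrow> A \<inter> B = {} \<and> til ({1..m} - A - B) L"
  proof
    assume H: "\<forall>r\<in>{1..m}. (if r \<in> L then 1 else 0) + (if r \<in> Suc ` L then 1 else 0) +
        (if r \<in> A then 1 else 0) + (if r \<in> B then 1 else (0::nat)) = 1"
    have Hr: "(if r \<in> L then 1 else 0) + (if r \<in> Suc ` L then 1 else 0) +
        (if r \<in> A then 1 else 0) + (if r \<in> B then 1 else (0::nat)) = 1" if "r \<in> {1..m}" for r
      by (rule bspec[OF H that])
    have 1: "A \<inter> B = {}"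
    proof (rule ccontr)
      assume "A \<inter> B \<noteq> {}"
      then obtain r where r: "r \<in> A" "r \<in> B" by auto
      then have "r \<in> {1..m}" using A by auto
      from Hr[OF this] r show False by simp
    qed
    have 2: "L \<inter> Suc ` L = {}"
    proof (rule ccontr)
      assume "L \<inter> Suc ` L \<noteq> {}"
      then obtain r where r: "r \<in> L" "r \<in> Suc ` L" by blast
      then have "r \<in> {1..m}" using L' by auto
      from Hr[OF this] r show False by simp
    qed
    have 3: "L \<union> Suc ` L = {1..m} - A - B"
    proof (intro equalityI subsetI)
      fix r assume r: "r \<in> L \<union> Suc ` L"
      then have rU: "r \<in> {1..m}" using L' SL by blast
      have "r \<notin> A \<and> r \<notin> B" using Hr[OF rU, unfolded one4] r by blast
      then show "r \<in> {1..m} - A - B" using rU by blast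
    next
      fix r assume r: "r \<in> {1..m} - A - B"
      then have "r \<notin> A" "r \<notin> B" "r \<in> {1..m}" by auto
      then show "r \<in> L \<union> Suc ` L" using Hr[of r, unfolded one4] by blast
    qed
    show "A \<inter> B = {} \<and> til ({1..m} - A - B) L" using 1 2 3 by (simp add: til_def)
  next
    assume H: "A \<inter> B = {} \<and> til ({1..m} - A - B) L"
    show "\<forall>r\<in>{1..m}. (if r \<in> L then 1 else 0) + (if r \<in> Suc ` L then 1 else 0) +
        (if r \<in> A then 1 else 0) + (if r \<in> B then 1 else (0::nat)) = 1"
    proof
      fix r assume r: "r \<in> {1..m}"
      have d: "L \<inter> Suc ` L = {}" "L \<union> Suc ` L = {1..m} - A - B" "A \<inter> B = {}"
        using H by (auto simp: til_def)
      have e1: "r \<in> L \<longrightarrow> r \<notin> Suc ` L" using d(1) by blast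
      have e2: "(r \<in> L \<or> r \<in> Suc ` L) \<longleftrightarrow> (r \<notin> A \<and> r \<notin> B)" using d(2) r by blast
      have e3: "r \<in> A \<longrightarrow> r \<notin> B" using d(3) by blast
      show "(if r \<in> L then 1 else 0) + (if r \<in> Suc ` L then 1 else 0) +
        (if r \<in> A then 1 else 0) + (if r \<in> B then 1 else (0::nat)) = 1"
        unfolding one4 using e1 e2 e3 by blast
    qed
  qed
  finally show ?thesis .
qed

lemma til_sub_m: "til ({1..m} - A - B) L \<Longrightarrow> L \<subseteq> {1..<m}"
proof
  fix i assume t: "til ({1..m} - A - B) L" and i: "i \<in> L"
  then have "i \<in> {1..m}" "Suc i \<in> {1..m}" unfolding til_def by auto
  then show "i \<in> {1..<m}" by auto
qed

lemma Tr_col: "rs m (Tr m 1 (vS m {1} s)) = col m s"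
proof (intro ext)
  fix A B
  show "rs m (Tr m 1 (vS m {1} s)) A B = col m s A B"
  proof (cases "A \<subseteq> {1..m} \<and> B \<subseteq> {1..m}")
    case False then show ?thesis by (auto simp: rs_def col_def)
  next
    case True
    then have A: "A \<subseteq> {1..m}" and B: "B \<subseteq> {1..m}" by auto
    have "(\<Sum>L\<in>{L. A \<inter> B = {} \<and> til ({1..m} - A - B) L}. s ^ card L) = Tr m 1 (vS m {1} s) A B"
      unfolding Tr_def
    proof (rule sum.reindex_bij_witness[where j = "\<lambda>L. ved s ` L" and i = "\<lambda>F. {i. ved s i \<in> F}"])
      fix L assume "L \<in> {L. A \<inter> B = {} \<and> til ({1..m} - A - B) L}"
      then have L: "A \<inter> B = {}" "til ({1..m} - A - B) L" by auto
      show "{i. ved s i \<in> ved s ` L} = L" using inj_ved[of s] by (auto simp: inj_image_mem_iff)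
      show "ved s ` L \<in> {F. pm m 1 (vS m {1} s) A B F}"
        using pm_col_iff[OF A B til_sub_m[OF L(2)], where s=s] L by simp
      have "finite L" using til_sub_m[OF L(2)] finite_subset by blast
      then show "(\<Prod>e\<in>ved s ` L. snd e) = s ^ card L"
        using prod.reindex[OF inj_on_subset[OF inj_ved[of s]], of L snd] by (simp add: ved_def)
    next
      fix F assume "F \<in> {F. pm m 1 (vS m {1} s) A B F}"
      then have F: "pm m 1 (vS m {1} s) A B F" by simp
      then have "F \<subseteq> vS m {1} s" unfolding pm_def by blast
      then have Fs: "F \<subseteq> ved s ` {1..<m}" by (simp only: vS1)
      let ?L = "{i. ved s i \<in> F}"
      have FL: "ved s ` ?L = F" using Fs by auto
      have Lm: "?L \<subseteq> {1..<m}"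
      proof
        fix x assume "x \<in> ?L"
        then have "ved s x \<in> ved s ` {1..<m}" using Fs by auto
        then show "x \<in> {1..<m}" by (metis inj_image_mem_iff inj_ved)
      qed
      show "ved s ` ?L = F" by (rule FL)
      show "?L \<in> {L. A \<inter> B = {} \<and> til ({1..m} - A - B) L}"
      proof -
        have "pm m 1 (vS m {1} s) A B (ved s ` ?L)" using F FL by simp
        then show ?thesis using pm_col_iff[OF A B Lm, where s=s] by simp
      qed
    qed
    moreover have "(\<Sum>L\<in>{L. A \<inter> B = {} \<and> til ({1..m} - A - B) L}. s ^ card L) = col m s A B"
    proof (cases "A \<inter> B = {}")
      case True then show ?thesis using A B by (simp add: col_def W_def)
    next
      case False then show ?thesis using A B by (simp add: col_def)
    qed
    ultimately show ?thesis using A B by (simp add: rs_def)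
  qed
qed

lemma one2: "((if a then 1 else 0) + (if b then 1 else (0::nat)) = 1) \<longleftrightarrow> (a \<and> \<not> b) \<or> (\<not> a \<and> b)"
  by auto

lemma Tr_ecol: "rs m (Tr m 1 {}) = ecol m"
proof (intro ext)
  fix A B
  show "rs m (Tr m 1 {}) A B = ecol m A B"
  proof (cases "A \<subseteq> {1..m} \<and> B \<subseteq> {1..m}")
    case False then show ?thesis by (auto simp: rs_def ecol_def)
  next
    case True
    have d0: "deg {} v = 0" for v by (simp add: deg_def)
    have c1: "(\<forall>v\<in>{1..m}\<times>{1..1}. deg {} v + bnd A B 1 v = 1) \<longleftrightarrow>
        (\<forall>r\<in>{1..m}. deg {} (r,1) + bnd A B 1 (r,1) = 1)" by auto
    have c2: "deg {} (r,1) + bnd A B 1 (r,1) = 1 \<longleftrightarrow> (r \<in> A \<and> r \<notin> B) \<or> (r \<notin> A \<and> r \<in> B)" for r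
      unfolding d0 bnd_def by (simp only: fst_conv snd_conv simp_thms add_0 one2)
    have c3: "(\<forall>r\<in>{1..m}. (r \<in> A \<and> r \<notin> B) \<or> (r \<notin> A \<and> r \<in> B)) \<longleftrightarrow> A \<inter> B = {} \<and> A \<union> B = {1..m}"
      using True by blast
    have pmc: "pm m 1 {} A B F \<longleftrightarrow> F = {} \<and> A \<inter> B = {} \<and> A \<union> B = {1..m}" for F
    proof -
      have "pm m 1 {} A B F \<longleftrightarrow> F = {} \<and> (\<forall>v\<in>{1..m}\<times>{1..1}. deg {} v + bnd A B 1 v = 1)"
        unfolding pm_def subset_empty by (rule conj_cong[OF refl]) simp
      then show ?thesis by (simp only: c1 c2 c3)
    qed
    have "{F. pm m 1 {} A B F} = (if A \<inter> B = {} \<and> A \<union> B = {1..m} then {{}} else {})"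
      unfolding pmc by auto
    then show ?thesis using True by (simp add: Tr_def rs_def ecol_def)
  qed
qed

lemma compl_iff: "C \<subseteq> U \<Longrightarrow> B \<subseteq> U \<Longrightarrow> (C \<inter> B = {} \<and> C \<union> B = U) \<longleftrightarrow> C = U - B"
  by blast

lemma mm_ecol_r: "mm m X (ecol m) = (\<lambda>A B. if A \<subseteq> {1..m} \<and> B \<subseteq> {1..m} then X A ({1..m} - B) else 0)"
proof (intro ext)
  fix A B
  show "mm m X (ecol m) A B = (if A \<subseteq> {1..m} \<and> B \<subseteq> {1..m} then X A ({1..m} - B) else 0)"
  proof (cases "A \<subseteq> {1..m} \<and> B \<subseteq> {1..m}")
    case True
    then have "mm m X (ecol m) A B = (\<Sum>C\<in>Pow {1..m}. X A C * (if C \<inter> B = {} \<and> C \<union> B = {1..m} then 1 else 0))"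
      unfolding mm_def ecol_def by (auto intro!: sum.cong)
    also have "\<dots> = (\<Sum>C\<in>Pow {1..m}. if C = {1..m} - B then X A C else 0)"
    proof (rule sum.cong[OF refl])
      fix C assume "C \<in> Pow {1..m}"
      then have "(C \<inter> B = {} \<and> C \<union> B = {1..m}) \<longleftrightarrow> C = {1..m} - B" using True compl_iff by blast
      then show "X A C * (if C \<inter> B = {} \<and> C \<union> B = {1..m} then 1 else 0) = (if C = {1..m} - B then X A C else 0)"
        by simp
    qed
    also have "\<dots> = X A ({1..m} - B)" by (simp add: sum.delta)
    finally show ?thesis using True by simp
  qed (auto simp: mm_def)
qed

lemma mm_ecol_l: "mm m (ecol m) X = (\<lambda>A B. if A \<subseteq> {1..m} \<and> B \<subseteq> {1..m} then X ({1..m} - A) B else 0)"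
proof (intro ext)
  fix A B
  show "mm m (ecol m) X A B = (if A \<subseteq> {1..m} \<and> B \<subseteq> {1..m} then X ({1..m} - A) B else 0)"
  proof (cases "A \<subseteq> {1..m} \<and> B \<subseteq> {1..m}")
    case True
    then have "mm m (ecol m) X A B = (\<Sum>C\<in>Pow {1..m}. (if A \<inter> C = {} \<and> A \<union> C = {1..m} then 1 else 0) * X C B)"
      unfolding mm_def ecol_def by (auto intro!: sum.cong)
    also have "\<dots> = (\<Sum>C\<in>Pow {1..m}. if C = {1..m} - A then X C B else 0)"
    proof (rule sum.cong[OF refl])
      fix C assume "C \<in> Pow {1..m}"
      then have "(A \<inter> C = {} \<and> A \<union> C = {1..m}) \<longleftrightarrow> C = {1..m} - A" using True compl_iff[of C "{1..m}" A] by blast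
      then show "(if A \<inter> C = {} \<and> A \<union> C = {1..m} then 1 else 0) * X C B = (if C = {1..m} - A then X C B else 0)"
        by simp
    qed
    also have "\<dots> = X ({1..m} - A) B" by (simp add: sum.delta)
    finally show ?thesis using True by simp
  qed (auto simp: mm_def)
qed

lemma ecol_ecol: "mm m (ecol m) (ecol m) = idm m"
  unfolding mm_ecol_l by (intro ext) (auto simp: ecol_def idm_def)

lemma K1:
  assumes A: "A \<subseteq> {1..m}" and B: "B \<subseteq> {1..m}"
  shows "(\<Sum>S\<in>Pow {1..m}. col m a A S * col m b ({1..m} - S) ({1..m} - B))
       = (if A \<subseteq> B then W (a + b) (B - A) else 0)"
proof -
  let ?U = "{1..m::nat}"
  let ?t = "\<lambda>S. col m a A S * col m b (?U - S) (?U - B)"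
  have t: "?t S = (if A \<inter> S = {} \<and> ?U \<subseteq> S \<union> B then W a (?U - A - S) * W b (S \<inter> B) else 0)"
    if S: "S \<subseteq> ?U" for S
  proof -
    have "?U - (?U - S) - (?U - B) = S \<inter> B" using S B by auto
    moreover have "(?U - S) \<inter> (?U - B) = {} \<longleftrightarrow> ?U \<subseteq> S \<union> B" by auto
    ultimately show ?thesis using A S by (auto simp: col_def)
  qed
  show ?thesis
  proof (cases "A \<subseteq> B")
    case False
    have "?t S = 0" if "S \<in> Pow ?U" for S
    proof -
      have nc: "\<not> (A \<inter> S = {} \<and> ?U \<subseteq> S \<union> B)" using False A by auto
      have "S \<subseteq> ?U" using that by simp
      from t[OF this, unfolded if_not_P[OF nc]] show ?thesis .
    qed
    then have "(\<Sum>S\<in>Pow ?U. ?t S) = 0" by (intro sum.neutral) blast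
    then show ?thesis using False by simp
  next
    case True
    let ?D = "B - A"
    let ?f = "\<lambda>V. (?U - B) \<union> V"
    have "(\<Sum>S\<in>Pow ?U. ?t S) = (\<Sum>S\<in>?f ` Pow ?D. ?t S)"
    proof (rule sum.mono_neutral_right)
      show "?f ` Pow ?D \<subseteq> Pow ?U" using B by auto
      show "\<forall>S\<in>Pow ?U - ?f ` Pow ?D. ?t S = 0"
      proof
        fix S assume S: "S \<in> Pow ?U - ?f ` Pow ?D"
        have "\<not> (A \<inter> S = {} \<and> ?U \<subseteq> S \<union> B)"
        proof
          assume H: "A \<inter> S = {} \<and> ?U \<subseteq> S \<union> B"
          have "S = ?f (S \<inter> B)" using H S by auto
          moreover have "S \<inter> B \<in> Pow ?D" using H by auto
          ultimately show False using S by blast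
        qed
        note nc = this
        have "S \<subseteq> ?U" using S by simp
        from t[OF this, unfolded if_not_P[OF nc]] show "?t S = 0" .
      qed
    qed simp
    also have "\<dots> = (\<Sum>V\<in>Pow ?D. ?t (?f V))"
    proof -
      have inj: "inj_on ?f (Pow ?D)" by (rule inj_onI) auto
      show ?thesis using sum.reindex[OF inj, of ?t] by (simp only: comp_def)
    qed
    also have "\<dots> = (\<Sum>V\<in>Pow ?D. W a (?D - V) * W b V)"
    proof (rule sum.cong[OF refl])
      fix V assume V: "V \<in> Pow ?D"
      have e1: "?U - A - ?f V = ?D - V" using V True B by auto
      have e2: "?f V \<inter> B = V" using V by auto
      have c: "A \<inter> ?f V = {} \<and> ?U \<subseteq> ?f V \<union> B" using V True A by auto
      have sub: "?f V \<subseteq> ?U" using V B by auto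
      from t[OF sub, unfolded if_P[OF c]]
      have "?t (?f V) = W a (?U - A - ?f V) * W b (?f V \<inter> B)" .
      then show "?t (?f V) = W a (?D - V) * W b V" by (simp only: e1 e2)
    qed
    also have "\<dots> = W (a + b) ?D" by (rule W_conv) (use B finite_subset in auto)
    finally show ?thesis using True by simp
  qed
qed

definition Pm where "Pm m = col m 1"
definition Qm where "Qm m = mm m (ecol m) (mm m (col m (-1)) (ecol m))"

lemma W0_fin: "B \<subseteq> {1..(m::nat)} \<Longrightarrow> W 0 (B - A) = (if B - A = {} then 1 else 0)"
  by (rule W0) (auto intro: finite_subset)

lemma key1: "mm m (Pm m) (Qm m) = idm m"
proof (intro ext)
  fix A B
  let ?U = "{1..m::nat}"
  show "mm m (Pm m) (Qm m) A B = idm m A B"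
  proof (cases "A \<subseteq> ?U \<and> B \<subseteq> ?U")
    case True
    have "mm m (Pm m) (Qm m) A B = (\<Sum>S\<in>Pow ?U. col m 1 A S * col m (-1) (?U - S) (?U - B))"
      using True unfolding Pm_def Qm_def mm_ecol_l mm_ecol_r
      by (auto simp: mm_def intro!: sum.cong)
    also have "\<dots> = (if A \<subseteq> B then W 0 (B - A) else 0)"
      using K1[of A m B 1 "-1"] True by simp
    also have "\<dots> = idm m A B" using True W0_fin[of B m A] by (auto simp: idm_def)
    finally show ?thesis .
  qed (auto simp: mm_def idm_def)
qed

lemma key2: "mm m (Qm m) (Pm m) = idm m"
proof (intro ext)
  fix A B
  let ?U = "{1..m::nat}"
  show "mm m (Qm m) (Pm m) A B = idm m A B"
  proof (cases "A \<subseteq> ?U \<and> B \<subseteq> ?U")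
    case True
    have "mm m (Qm m) (Pm m) = mm m (ecol m) (mm m (col m (-1)) (mm m (ecol m) (col m 1)))"
      unfolding Qm_def Pm_def by (simp add: mm_assoc)
    then have "mm m (Qm m) (Pm m) A B = (\<Sum>S\<in>Pow ?U. col m (-1) (?U - A) S * col m 1 (?U - S) (?U - (?U - B)))"
      using True unfolding mm_ecol_l
      by (auto simp: mm_def double_diff intro!: sum.cong)
    also have "\<dots> = (if ?U - A \<subseteq> ?U - B then W 0 ((?U - B) - (?U - A)) else 0)"
      using K1[of "?U - A" m "?U - B" "-1" 1] True by simp
    also have "\<dots> = idm m A B" using True W0_fin[of "?U - B" m "?U - A"] by (auto simp: idm_def)
    finally show ?thesis .
  qed (auto simp: mm_def idm_def)
qed

definition GE :: "nat \<Rightarrow> nat \<Rightarrow> sedge set" where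
  "GE m N = hS m {1..<N} \<union> vS m {1..N} 1"

definition KE :: "nat \<Rightarrow> nat \<Rightarrow> sedge set" where
  "KE m p = hS m {1..<p+1} \<union> vS m {1..p} (-1)"

lemma sh_hS: "shift_edge k ` hS m J = hS m ((\<lambda>j. j + k) ` J)"
  unfolding hS_def shift_edge_def by (auto simp: image_iff)

lemma sh_vS: "shift_edge k ` vS m J s = vS m ((\<lambda>j. j + k) ` J) s"
  unfolding vS_def shift_edge_def by (auto simp: image_iff)

lemma jn_hS: "jn N1 ` {1..m} = hS m {N1}"
  unfolding hS_def jn_def by auto

lemma hS_Un: "hS m J1 \<union> hS m J2 = hS m (J1 \<union> J2)"
  unfolding hS_def by auto

lemma vS_Un: "vS m J1 s \<union> vS m J2 s = vS m (J1 \<union> J2) s"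
  unfolding vS_def by auto

lemma hS_empty[simp]: "hS m {} = {}" unfolding hS_def by simp
lemma vS_empty[simp]: "vS m {} s = {}" unfolding vS_def by simp

lemma wfE_hv:
  assumes "J \<subseteq> {1..<N}" "J' \<subseteq> {1..N}"
  shows "wfE m N (hS m J \<union> vS m J' s)"
proof -
  have fJ: "finite J" "finite J'" using assms finite_subset by auto
  have 1: "finite (hS m J \<union> vS m J' s)" unfolding hS_def vS_def using fJ by simp
  have 2: "ends e \<subseteq> {1..m}\<times>{1..N}" if e: "e \<in> hS m J" for e
  proof -
    obtain x where x: "x \<in> {1..m} \<times> J" "e = (\<lambda>(i,j). (((i,j),(i,j+1)),1::int)) x" using e unfolding hS_def by (rule imageE)
    obtain i j where "x = (i,j)" by force
    then have "(i,j) \<in> {1..m} \<times> J" "e = (((i,j),(i,j+1)),1)" using x by auto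
    moreover have "j \<in> {1..<N}" using assms(1) \<open>(i,j) \<in> {1..m} \<times> J\<close> by blast
    ultimately show ?thesis by (auto simp: ends_def)
  qed
  have 3: "ends e \<subseteq> {1..m}\<times>{1..N}" if e: "e \<in> vS m J' s" for e
  proof -
    obtain x where x: "x \<in> {1..<m} \<times> J'" "e = (\<lambda>(i,j). (((i,j),(i+1,j)),s)) x" using e unfolding vS_def by (rule imageE)
    obtain i j where "x = (i,j)" by force
    then have "(i,j) \<in> {1..<m} \<times> J'" "e = (((i,j),(i+1,j)),s)" using x by auto
    moreover have "j \<in> {1..N}" using assms(2) \<open>(i,j) \<in> {1..<m} \<times> J'\<close> by blast
    ultimately show ?thesis by (auto simp: ends_def)
  qed
  show ?thesis unfolding wfE_def using 1 2 3 by blast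
qed

lemma AdjE_hv:
  "AdjE m 1 (vS m {1} s) (hS m J \<union> vS m J' s) = hS m ({1} \<union> (\<lambda>j. j+1) ` J) \<union> vS m ({1} \<union> (\<lambda>j. j+1) ` J') s"
  unfolding AdjE_def image_Un sh_hS sh_vS jn_hS
  by (simp only: hS_Un[symmetric] vS_Un[symmetric]) blast

lemma AdjE_hv0:
  "AdjE m 1 {} (hS m J \<union> vS m J' s) = hS m ({1} \<union> (\<lambda>j. j+1) ` J) \<union> vS m ((\<lambda>j. j+1) ` J') s"
  unfolding AdjE_def image_Un sh_hS sh_vS jn_hS
  by (simp only: hS_Un[symmetric]) blast

lemma img1: "(\<lambda>j. j + 1) ` {a..<b} = {Suc a..<Suc b}" "(\<lambda>j. j + 1) ` {a..b} = {Suc a..Suc b}"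
proof -
  have e: "(\<lambda>j::nat. j + 1) = Suc" by auto
  show "(\<lambda>j. j + 1) ` {a..<b} = {Suc a..<Suc b}" unfolding e by (rule image_Suc_atLeastLessThan)
  show "(\<lambda>j. j + 1) ` {a..b} = {Suc a..Suc b}" unfolding e by (rule image_Suc_atLeastAtMost)
qed

lemma GE_step: "N \<ge> 1 \<Longrightarrow> AdjE m 1 (vS m {1} 1) (GE m N) = GE m (N + 1)"
proof -
  assume N: "N \<ge> 1"
  have "{1} \<union> (\<lambda>j. j+1) ` {1..<N} = {1..<N+1}" using N by (auto simp: img1)
  moreover have "{1} \<union> (\<lambda>j. j+1) ` {1..N} = {1..N+1}" using N by (auto simp: img1)
  ultimately show ?thesis unfolding GE_def AdjE_hv by simp
qed

lemma KE_step: "AdjE m 1 (vS m {1} (-1)) (KE m p) = KE m (p + 1)"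
proof -
  have "{1} \<union> (\<lambda>j. j+1) ` {1..<p+1} = {1..<p+2}" by (auto simp: img1)
  moreover have "{1} \<union> (\<lambda>j. j+1) ` {1..p} = {1..p+1}" by (auto simp: img1)
  ultimately show ?thesis unfolding KE_def AdjE_hv by simp
qed

lemma KE0: "KE m 0 = {}" unfolding KE_def by simp

lemma GN: "AdjE m 1 {} (KE m p) = hS m {1..<p+2} \<union> vS m {2..<p+2} (-1)"
proof -
  have "{1} \<union> (\<lambda>j. j+1) ` {1..<p+1} = {1..<p+2}" by (auto simp: img1)
  moreover have "(\<lambda>j. j+1) ` {1..p} = {2..<p+2}" by (auto simp: img1)
  ultimately show ?thesis unfolding KE_def AdjE_hv0 by simp
qed

lemma wf_GE: "wfE m N (GE m N)" unfolding GE_def by (rule wfE_hv) auto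
lemma wf_KE: "wfE m (p+1) (KE m p)" unfolding KE_def by (rule wfE_hv) auto
lemma wf_col: "wfE m 1 (vS m {1} s)" using wfE_hv[of "{}" 1 "{1}" m s] by simp
lemma wf_empty: "wfE m 1 {}" by (simp add: wfE_def)

lemma adj_TM:
  assumes "wfE m N1 E1" "wfE m N2 E2" "N1 \<ge> 1" "N2 \<ge> 1"
  shows "rs m (Tr m (N1+N2) (AdjE m N1 E1 E2)) = mm m (rs m (Tr m N1 E1)) (rs m (Tr m N2 E2))"
  using adj_Tr[OF assms] by (intro ext) (simp add: rs_def mm_def)

lemma rs_col[simp]: "rs m (col m s) = col m s" by (intro ext) (simp add: rs_def col_def)
lemma rs_ecol[simp]: "rs m (ecol m) = ecol m" by (intro ext) (simp add: rs_def ecol_def)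

lemma TGE: "N \<ge> 1 \<Longrightarrow> rs m (Tr m N (GE m N)) = pow m (Pm m) N"
proof (induction N rule: dec_induct)
  case base
  have "GE m 1 = vS m {1} 1" unfolding GE_def by simp
  then show ?case using Tr_col[of m 1] by (simp add: Pm_def)
next
  case (step N)
  have "rs m (Tr m (N+1) (GE m (N+1))) = rs m (Tr m (1 + N) (AdjE m 1 (vS m {1} 1) (GE m N)))"
    using GE_step[OF step(1)] by (simp add: add.commute)
  also have "\<dots> = mm m (col m 1) (pow m (Pm m) N)"
    unfolding adj_TM[OF wf_col[of m 1] wf_GE[of m N] le_refl step(1)] step(3) Tr_col[of m 1] by (simp add: Pm_def)
  finally show ?case by (simp add: Pm_def)
qed

lemma TKE: "rs m (Tr m (p+1) (KE m p)) = mm m (pow m (col m (-1)) p) (ecol m)"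
proof (induction p)
  case 0
  then show ?case using Tr_ecol[of m] by (simp add: KE0)
next
  case (Suc p)
  have "rs m (Tr m (Suc p + 1) (KE m (Suc p))) = rs m (Tr m (1 + (p+1)) (AdjE m 1 (vS m {1} (-1)) (KE m p)))"
    using KE_step[of m p] by simp
  also have "\<dots> = mm m (col m (-1)) (mm m (pow m (col m (-1)) p) (ecol m))"
    unfolding adj_TM[OF wf_col[of m "-1"] wf_KE[of m p] le_refl le_add2] Suc.IH Tr_col[of m "-1"] ..
  finally show ?case by (simp add: mm_assoc)
qed

lemma QP_pow: "mm m (ecol m) (mm m (pow m (col m (-1)) p) (ecol m)) = pow m (Qm m) p"
proof (induction p)
  case 0
  then show ?case by (simp add: ecol_ecol)
next
  case (Suc p)
  let ?Z = "mm m (pow m (col m (-1)) p) (ecol m)"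
  have "pow m (Qm m) (Suc p) = mm m (Qm m) (mm m (ecol m) ?Z)"
    by (simp only: pow.simps(2) Suc.IH)
  also have "\<dots> = mm m (ecol m) (mm m (col m (-1)) (mm m (mm m (ecol m) (ecol m)) ?Z))"
    unfolding Qm_def by (simp only: mm_assoc)
  also have "\<dots> = mm m (ecol m) (mm m (col m (-1)) ?Z)" by (simp add: ecol_ecol)
  finally show ?case by (simp add: mm_assoc)
qed

lemma TGN: "rs m (Tr m (p+2) (AdjE m 1 {} (KE m p))) = pow m (Qm m) p"
proof -
  have "rs m (Tr m (1 + (p+1)) (AdjE m 1 {} (KE m p))) = mm m (ecol m) (mm m (pow m (col m (-1)) p) (ecol m))"
    unfolding adj_TM[OF wf_empty[of m] wf_KE[of m p] le_refl le_add2] TKE[of m p] Tr_ecol[of m] ..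
  then show ?thesis using QP_pow by simp
qed

definition wfL :: "nat \<Rightarrow> sgraph \<Rightarrow> bool" where
  "wfL m g \<longleftrightarrow> distinct (sedges g) \<and> (\<forall>e\<in>set (sedges g). ends e \<subseteq> verts m g) \<and> ncols g \<ge> 1"

lemma wfL_wfE: "wfL m g \<Longrightarrow> wfE m (ncols g) (set (sedges g))"
  unfolding wfL_def wfE_def verts_def by auto

lemma G_pos:
  assumes "n \<ge> 1"
  shows "ncols (Ggrid m n) = nat n" "set (sedges (Ggrid m n)) = GE m (nat n)"
proof -
  have "set [1..<nat n + 1] = {1..nat n}" by auto
  then show "ncols (Ggrid m n) = nat n" "set (sedges (Ggrid m n)) = GE m (nat n)"
    using assms by (simp_all add: Ggrid_def GE_def set_hedges set_vedges)
qed

lemma G_neg: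
  assumes "n \<le> 0"
  shows "ncols (Ggrid m n) = nat (-n) + 2" "set (sedges (Ggrid m n)) = AdjE m 1 {} (KE m (nat (-n)))"
proof -
  have e: "nat (2 - n) = nat (-n) + 2" using assms by simp
  show "ncols (Ggrid m n) = nat (-n) + 2" using assms e by (simp add: Ggrid_def)
  have G: "Ggrid m n = SG (nat (2-n)) (hedges m (nat (2-n)) @ vedges m [2..<nat (2-n)] (-1))"
    using assms by (simp add: Ggrid_def)
  have "set (sedges (Ggrid m n)) = hS m {1..<nat (2-n)} \<union> vS m {2..<nat (2-n)} (-1)"
    unfolding G by (simp only: sgraph.sel set_append set_hedges set_vedges set_upt)
  then show "set (sedges (Ggrid m n)) = AdjE m 1 {} (KE m (nat (-n)))"
    unfolding GN e .
qed

lemma TM_G: "rs m (Tr m (ncols (Ggrid m n)) (set (sedges (Ggrid m n)))) = pw m (Pm m) (Qm m) n"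
proof (cases "n \<ge> 1")
  case True
  then show ?thesis using G_pos[OF True] TGE[of "nat n" m] by (simp add: pw_def)
next
  case False
  then have n: "n \<le> 0" by simp
  have "rs m (Tr m (ncols (Ggrid m n)) (set (sedges (Ggrid m n)))) = pow m (Qm m) (nat (-n))"
    using G_neg[OF n] TGN[of m "nat (-n)"] by simp
  then show ?thesis using n by (cases "n = 0") (simp_all add: pw_def)
qed

lemma hS_vS_disj: "hS m J \<inter> vS m J' s = {}"
  unfolding hS_def vS_def by auto

lemma wfL_G: "wfL m (Ggrid m n)"
proof (cases "n \<ge> 1")
  case True
  have d: "distinct (sedges (Ggrid m n))"
    using True hS_vS_disj by (simp add: Ggrid_def distinct_hedges distinct_vedges set_hedges set_vedges)
  have w: "wfE m (nat n) (GE m (nat n))" by (rule wf_GE)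
  show ?thesis using d w G_pos[OF True] True unfolding wfL_def wfE_def verts_def by auto
next
  case False
  then have n: "n \<le> 0" by simp
  have d: "distinct (sedges (Ggrid m n))"
    using n hS_vS_disj by (simp add: Ggrid_def distinct_hedges distinct_vedges set_hedges set_vedges)
  have w: "wfE m (nat (-n) + 2) (hS m {1..<nat (-n)+2} \<union> vS m {2..<nat (-n)+2} (-1))"
    by (rule wfE_hv) auto
  show ?thesis using d w G_neg[OF n] unfolding wfL_def wfE_def verts_def GN by auto
qed

lemma joins: "[(((i, N1), (i, N1 + 1)), 1). i \<leftarrow> xs] = map (jn N1) xs"
  by (induction xs) (auto simp: jn_def)

lemma adjoin_sedges: "sedges (adjoin m g1 g2) = sedges g1 @ map (shift_edge (ncols g1)) (sedges g2) @ map (jn (ncols g1)) [1..<m+1]"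
  unfolding adjoin_def joins by simp

lemma adjoin_set: "set (sedges (adjoin m g1 g2)) = AdjE m (ncols g1) (set (sedges g1)) (set (sedges g2))"
  unfolding adjoin_sedges AdjE_def by auto

lemma wfL_adj:
  assumes w1: "wfL m g1" and w2: "wfL m g2"
  shows "wfL m (adjoin m g1 g2)"
proof -
  let ?N1 = "ncols g1" and ?N2 = "ncols g2"
  have e1: "wfE m ?N1 (set (sedges g1))" and e2: "wfE m ?N2 (set (sedges g2))"
    using w1 w2 by (auto intro: wfL_wfE)
  note dj = adj_disj[OF e1 e2]
  have N: "?N1 \<ge> 1" "?N2 \<ge> 1" using w1 w2 by (auto simp: wfL_def)
  have d: "distinct (sedges (adjoin m g1 g2))"
    unfolding adjoin_sedges
  proof -
    have "distinct (map (shift_edge ?N1) (sedges g2))"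
      using w2 inj_on_subset[OF inj_shift] by (auto simp: wfL_def distinct_map)
    moreover have "distinct (map (jn ?N1) [1..<m+1])"
      using inj_on_subset[OF inj_jn] by (auto simp: distinct_map)
    moreover have "set (map (shift_edge ?N1) (sedges g2)) \<inter> set (map (jn ?N1) [1..<m+1]) = {}"
      unfolding set_map by (rule img_disj) (rule dj(3))
    moreover have "set (sedges g1) \<inter> set (map (shift_edge ?N1) (sedges g2) @ map (jn ?N1) [1..<m+1]) = {}"
    proof -
      have "set (sedges g1) \<inter> jn ?N1 ` set [1..<m+1] = {}" by (rule img_disj) (rule dj(2))
      then show ?thesis using dj(1) by auto
    qed
    ultimately show "distinct (sedges g1 @ map (shift_edge ?N1) (sedges g2) @ map (jn ?N1) [1..<m+1])"
      using w1 by (simp add: wfL_def)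
  qed
  have en: "ends e \<subseteq> {1..m} \<times> {1..?N1 + ?N2}" if e: "e \<in> AdjE m ?N1 (set (sedges g1)) (set (sedges g2))" for e
  proof -
    consider (a) "e \<in> set (sedges g1)" | (b) e' where "e' \<in> set (sedges g2)" "e = shift_edge ?N1 e'"
      | (c) i where "i \<in> {1..m}" "e = jn ?N1 i"
      using e unfolding AdjE_def by blast
    then show ?thesis
    proof cases
      case a then show ?thesis using e1 unfolding wfE_def by force
    next
      case b
      have "ends e' \<subseteq> {1..m} \<times> {1..?N2}" using e2 b(1) unfolding wfE_def by blast
      then show ?thesis using b(2) by (force simp: ends_shift)
    next
      case c then show ?thesis using N by (auto simp: ends_jn)
    qed
  qed
  show ?thesis using d en N unfolding wfL_def verts_def adjoin_set[symmetric]
    by (simp add: adjoin_def)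
qed

lemma main_ind:
  "ns \<noteq> [] \<Longrightarrow> wfL m (adjoin_list m (map (Ggrid m) ns)) \<and>
     rs m (Tr m (ncols (adjoin_list m (map (Ggrid m) ns))) (set (sedges (adjoin_list m (map (Ggrid m) ns)))))
       = pw m (Pm m) (Qm m) (sum_list ns)"
proof (induction ns)
  case Nil then show ?case by simp
next
  case (Cons n ns)
  show ?case
  proof (cases "ns = []")
    case True
    then show ?thesis using wfL_G TM_G by simp
  next
    case False
    let ?X = "adjoin_list m (map (Ggrid m) ns)"
    have IH: "wfL m ?X" "rs m (Tr m (ncols ?X) (set (sedges ?X))) = pw m (Pm m) (Qm m) (sum_list ns)"
      using Cons.IH False by auto
    obtain n' ns' where ns: "ns = n' # ns'" using False by (cases ns) auto
    have eq: "adjoin_list m (map (Ggrid m) (n # ns)) = adjoin m (Ggrid m n) ?X"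
      using ns by simp
    have wG: "wfL m (Ggrid m n)" by (rule wfL_G)
    have N: "ncols (Ggrid m n) \<ge> 1" "ncols ?X \<ge> 1" using wG IH(1) by (auto simp: wfL_def)
    have "rs m (Tr m (ncols (adjoin m (Ggrid m n) ?X)) (set (sedges (adjoin m (Ggrid m n) ?X))))
        = mm m (rs m (Tr m (ncols (Ggrid m n)) (set (sedges (Ggrid m n))))) (rs m (Tr m (ncols ?X) (set (sedges ?X))))"
      unfolding adjoin_set using adj_TM[OF wfL_wfE[OF wG] wfL_wfE[OF IH(1)] N] by (simp add: adjoin_def)
    also have "\<dots> = pw m (Pm m) (Qm m) (n + sum_list ns)"
      unfolding TM_G IH(2) by (rule pw_add[OF key1 key2])
    finally show ?thesis using eq wfL_adj[OF wG IH(1)] by simp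
  qed
qed

theorem mainTheorem3:
  fixes m :: nat and ns :: "int list"
  assumes "m \<ge> 1" and "ns \<noteq> []"
  shows "Mat m (adjoin_list m (map (Ggrid m) ns)) = Mat m (Ggrid m (sum_list ns))"
proof -
  let ?X = "adjoin_list m (map (Ggrid m) ns)" and ?Y = "Ggrid m (sum_list ns)"
  have X: "wfL m ?X" "rs m (Tr m (ncols ?X) (set (sedges ?X))) = pw m (Pm m) (Qm m) (sum_list ns)"
    using main_ind[OF assms(2), of m] by auto
  have Y: "wfL m ?Y" by (rule wfL_G)
  have "Mat m ?X = Tr m (ncols ?X) (set (sedges ?X)) {} {}"
    using X(1) by (intro Mat_Tr) (auto simp: wfL_def)
  also have "\<dots> = rs m (Tr m (ncols ?X) (set (sedges ?X))) {} {}" by (simp add: rs_def)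
  also have "\<dots> = rs m (Tr m (ncols ?Y) (set (sedges ?Y))) {} {}" unfolding X(2) TM_G ..
  also have "\<dots> = Tr m (ncols ?Y) (set (sedges ?Y)) {} {}" by (simp add: rs_def)
  also have "\<dots> = Mat m ?Y"
    using Y by (intro Mat_Tr[symmetric]) (auto simp: wfL_def)
  finally show ?thesis .
qed

end
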